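(* Let $a,b,P_{\max}>0$ and set $\theta=b+b^2P_{\max}$. Define $$Q_{sym}=\frac{\Re\!\left(\sqrt{(a-\theta)(a-\theta+a^2P_{\max})}\right)-\theta}{ab}.$$ If $b\ge \sqrt{1+aP_{\max}}/P_{\max}$, then $Q_{sym}\le 0$. Consequently, in the symmetric two-user channel ($c=a$, $d=b$), both frontier curves $\Phi_1$ and $\Phi_2$ are convex.
   Context: This is the symmetric two-user interference channel with interference treated as noise. The rates are $R_1=\log_2(1+\frac{aP_1}{1+bP_2})$ and $R_2=\log_2(1+\frac{aP_2}{1+bP_1})$, with $P_i\in[0,P_{\max}]$. $\Phi_2$ is the curve of rate pairs with $P_2=P_{\max}$ and $P_1\in[0,P_{\max}]$; $\Phi_1$ is the curve with $P_1=P_{\max}$ and $P_2\in[0,P_{\max}]$. The second derivative of $\Phi_2$ (as $r_2$ versus $r_1$) has the sign of $P_1-Q_{sym}$, and by symmetry the same holds for $\Phi_1$ with $P_2$ in place of $P_1$. $\Re$ denotes the real part. *)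

theory Defs
  imports "HOL-Analysis.Analysis"
begin

text \<open>Rates of the symmetric two-user interference channel (c = a, d = b),
  interference treated as noise.\<close>
definition rate1 :: "real \<Rightarrow> real \<Rightarrow> real \<Rightarrow> real \<Rightarrow> real" where
  "rate1 a b P1 P2 = log 2 (1 + a * P1 / (1 + b * P2))"

definition rate2 :: "real \<Rightarrow> real \<Rightarrow> real \<Rightarrow> real \<Rightarrow> real" where
  "rate2 a b P1 P2 = log 2 (1 + a * P2 / (1 + b * P1))"

definition Phi2 :: "real \<Rightarrow> real \<Rightarrow> real \<Rightarrow> (real \<times> real) set" where
  "Phi2 a b Pmax = (\<lambda>P1. (rate1 a b P1 Pmax, rate2 a b P1 Pmax)) ` {0..Pmax}"

definition Phi1 :: "real \<Rightarrow> real \<Rightarrow> real \<Rightarrow> (real \<times> real) set" where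
  "Phi1 a b Pmax = (\<lambda>P2. (rate1 a b Pmax P2, rate2 a b Pmax P2)) ` {0..Pmax}"

definition convex_curve :: "(real \<times> real) set \<Rightarrow> bool" where
  "convex_curve C \<longleftrightarrow>
     (\<exists>g. convex_on (fst ` C) g \<and> C = (\<lambda>r. (r, g r)) ` (fst ` C))"

definition theta_sym :: "real \<Rightarrow> real \<Rightarrow> real \<Rightarrow> real" where
  "theta_sym a b Pmax = b + b^2 * Pmax"

definition Q_sym :: "real \<Rightarrow> real \<Rightarrow> real \<Rightarrow> real" where
  "Q_sym a b Pmax =
     (Re (csqrt (complex_of_real ((a - theta_sym a b Pmax) * (a - theta_sym a b Pmax + a^2 * Pmax))))
       - theta_sym a b Pmax) / (a * b)"

end

theory Submission imports Defs begin

lemma keyK: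
  fixes a b P :: real
  assumes a: "a > 0" and b: "b > 0" and P: "P > 0"
    and h: "b \<ge> sqrt (1 + a * P) / P"
  shows "a * (1 + a * P) \<le> (b + b^2*P) * (2 + a * P)"
proof -
  define s where "s = sqrt (1 + a*P)"
  have s0: "s \<ge> 1" unfolding s_def using a P by simp
  have s2: "s^2 = 1 + a*P" unfolding s_def using a P by simp
  have bP: "b*P \<ge> s" using h P unfolding s_def by (simp add: field_simps)
  have tP: "(b + b^2*P)*P \<ge> s*(1+s)"
  proof -
    have "(b + b^2*P)*P = (b*P)*(1+b*P)" by (simp add: algebra_simps power2_eq_square)
    also have "\<dots> \<ge> s*(1+s)" using bP s0 by (intro mult_mono) auto
    finally show ?thesis .
  qed
  have "a*P*(1+a*P) \<le> (b + b^2*P)*P*(2+a*P)"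
  proof -
    have "a*P*(1+a*P) = (s^2 - 1) * s^2" using s2 by simp
    also have "\<dots> \<le> s*(1+s)*(1+s^2)"
    proof -
      have "(s - 1) * s \<le> 1 + s^2" using s0 by (simp add: power2_eq_square algebra_simps)
      then have "(s - 1) * s * (s * (1 + s)) \<le> (1 + s^2) * (s * (1 + s))" using s0 by (intro mult_right_mono) auto
      then show ?thesis by (simp add: power2_eq_square algebra_simps)
    qed
    also have "\<dots> \<le> ((b + b^2*P)*P)*(1 + s^2)" using tP s0 by (intro mult_right_mono) auto
    also have "\<dots> = (b + b^2*P)*P*(2+a*P)" using s2 by simp
    finally show ?thesis .
  qed
  then show ?thesis using P by (simp add: mult.commute mult.left_commute)
qed

lemma Qpart:
  fixes a b P :: real
  assumes a: "a > 0" and b: "b > 0" and P: "P > 0"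
    and K: "a * (1 + a * P) \<le> (b + b^2*P) * (2 + a * P)"
  shows "Q_sym a b P \<le> 0"
proof -
  define t where "t = theta_sym a b P"
  have t: "t = b + b^2*P" unfolding t_def theta_sym_def by simp
  have t0: "t > 0" using t a b P by (simp add: add_pos_nonneg)
  define x where "x = (a - t) * (a - t + a^2*P)"
  have xle: "x \<le> t^2"
  proof -
    have "x - t^2 = a * (a*(1+a*P) - t*(2+a*P))" unfolding x_def by (simp add: algebra_simps power2_eq_square)
    also have "\<dots> \<le> 0" using K t a by (simp add: mult_nonneg_nonpos)
    finally show ?thesis by simp
  qed
  have "Re (csqrt (complex_of_real x)) \<le> t"
  proof (cases "x \<ge> 0")
    case True
    then have "Re (csqrt (complex_of_real x)) = sqrt x" by (simp add: csqrt_of_real)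
    also have "\<dots> \<le> sqrt (t^2)" by (rule real_sqrt_le_mono[OF xle])
    also have "\<dots> = t" using t0 by simp
    finally show ?thesis .
  next
    case False then show ?thesis using t0 by simp
  qed
  then show ?thesis unfolding Q_sym_def t_def[symmetric] x_def[symmetric]
    using a b by (simp add: divide_nonpos_pos)
qed
lemma d_ln:
  fixes k be c r :: real
  assumes "k + be*exp(c*r) > 0"
  shows "((\<lambda>r. ln (k + be*exp(c*r))) has_real_derivative c * (be*exp(c*r)/(k + be*exp(c*r)))) (at r)"
proof -
  have d: "((\<lambda>r. k + be*exp(c*r)) has_real_derivative be*(exp(c*r)*c)) (at r)"
    by (intro derivative_eq_intros) auto
  have "((\<lambda>r. ln (k + be*exp(c*r))) has_real_derivative inverse (k + be*exp(c*r)) * (be*(exp(c*r)*c))) (at r)"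
    using DERIV_chain2[OF DERIV_ln[OF assms] d] by simp
  then show ?thesis by (simp add: divide_inverse mult_ac)
qed
lemma d_q:
  fixes k be c r :: real
  assumes "k + be*exp(c*r) \<noteq> 0"
  shows "((\<lambda>r. be*exp(c*r)/(k + be*exp(c*r))) has_real_derivative c*(be*exp(c*r))*k/(k + be*exp(c*r))^2) (at r)"
proof -
  have d: "((\<lambda>r. k + be*exp(c*r)) has_real_derivative be*(exp(c*r)*c)) (at r)"
    by (intro derivative_eq_intros) auto
  have d2: "((\<lambda>r. be*exp(c*r)) has_real_derivative be*(exp(c*r)*c)) (at r)"
    by (intro derivative_eq_intros) auto
  have "((\<lambda>r. be*exp(c*r)/(k + be*exp(c*r))) has_real_derivative
     (be*(exp(c*r)*c) * (k + be*exp(c*r)) - be*exp(c*r) * (be*(exp(c*r)*c))) / ((k + be*exp(c*r)) * (k + be*exp(c*r)))) (at r)"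
    by (rule DERIV_divide[OF d2 d assms])
  moreover have "(be*(exp(c*r)*c) * (k + be*exp(c*r)) - be*exp(c*r) * (be*(exp(c*r)*c))) / ((k + be*exp(c*r)) * (k + be*exp(c*r)))
     = c*(be*exp(c*r))*k/(k + be*exp(c*r))^2"
    by (simp add: power2_eq_square algebra_simps)
  ultimately show ?thesis by simp
qed

lemma curve_conv:
  fixes F G g :: "real \<Rightarrow> real"
  assumes "continuous_on S F" "connected S" "\<And>p. p\<in>S \<Longrightarrow> g (F p) = G p"
    "F ` S \<subseteq> T" "convex_on T g"
  shows "convex_curve ((\<lambda>p. (F p, G p)) ` S)"
proof -
  have fs: "fst ` ((\<lambda>p. (F p, G p)) ` S) = F ` S" by (simp add: image_image)
  have "connected (F ` S)" using assms(1,2) by (rule connected_continuous_image)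
  then have cv: "convex (F ` S)" by (simp add: is_interval_connected_1[symmetric] is_interval_convex_1)
  show ?thesis unfolding convex_curve_def fs
  proof (intro exI conjI)
    show "convex_on (F ` S) g" by (rule convex_on_subset[OF assms(5) assms(4) cv])
    show "(\<lambda>p. (F p, G p)) ` S = (\<lambda>r. (r, g r)) ` F ` S"
      using assms(3) by (auto simp: image_image image_iff)
  qed
qed

lemma phi2_conv:
  fixes a b P :: real
  assumes a: "a > 0" and b: "b > 0" and P: "P > 0"
    and K: "a * (1 + a * P) \<le> (b + b^2*P) * (2 + a * P)"
  shows "convex_curve (Phi2 a b P)"
proof -
  define c where "c = ln (2::real)"
  have c0: "c > 0" unfolding c_def by simp
  define be where "be = (b + b^2*P)/a"
  define ga where "ga = 1 - be"
  define al where "al = ga + a*P"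
  have be0: "be > 0" unfolding be_def using a b P by (simp add: add_pos_nonneg)
  have cond: "be^2 \<ge> al*ga"
  proof -
    have "a^2 * (be^2 - al*ga) = a * ((b + b^2*P) * (2 + a * P) - a * (1 + a * P))"
      unfolding al_def ga_def be_def using a by (simp add: field_simps power2_eq_square)
    also have "\<dots> \<ge> 0" using K a by simp
    finally have "a^2 * (be^2 - al*ga) \<ge> 0" .
    then have "be^2 - al*ga \<ge> 0" using a by (simp add: zero_le_mult_iff)
    then show ?thesis by simp
  qed
  define g where "g r = (ln (al + be*exp(c*r)) - ln (ga + be*exp(c*r))) / c" for r
  define g' where "g' r = be*exp(c*r)/(al + be*exp(c*r)) - be*exp(c*r)/(ga + be*exp(c*r))" for r
  define g'' where "g'' r = c*(be*exp(c*r))*al/(al + be*exp(c*r))^2 - c*(be*exp(c*r))*ga/(ga + be*exp(c*r))^2" for r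
  have pos: "ga + be*exp(c*r) \<ge> 1" "al + be*exp(c*r) > 1" if "r \<ge> 0" for r
  proof -
    have "exp(c*r) \<ge> 1" using that c0 by simp
    then have "be*exp(c*r) \<ge> be" using be0 by simp
    moreover have "a*P > 0" using a P by simp
    ultimately show "ga + be*exp(c*r) \<ge> 1" "al + be*exp(c*r) > 1" unfolding al_def ga_def by auto
  qed
  have conv: "convex_on {0..} g"
  proof (rule f''_ge0_imp_convex)
    show "convex {0::real..}" by simp
  next
    fix r :: real assume "r \<in> {0..}"
    then have r: "r \<ge> 0" by simp
    note p0 = pos[OF r]
    have p: "ga + be*exp(c*r) \<noteq> 0" "al + be*exp(c*r) \<noteq> 0" "ga + be*exp(c*r) > 0" "al + be*exp(c*r) > 0" using p0 by auto
    have e: "(c * (be*exp(c*r)/(al + be*exp(c*r))) - c * (be*exp(c*r)/(ga + be*exp(c*r)))) / c = g' r"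
      unfolding g'_def using c0 p by (simp add: diff_divide_distrib)
    show "DERIV g r :> g' r" unfolding g_def e[symmetric]
      by (intro DERIV_cdivide DERIV_diff d_ln p)
    show "DERIV g' r :> g'' r" unfolding g'_def g''_def
      by (intro DERIV_diff d_q p)
    show "g'' r \<ge> 0"
    proof -
      define u where "u = be*exp(c*r)"
      have u: "u \<ge> be" unfolding u_def using be0 c0 r by simp
      have "u^2 \<ge> al*ga" using cond u be0
        by (smt (verit) mult_mono power2_eq_square)
      have A: "ga + u \<ge> 1" "al + u > 1" using p0 unfolding u_def by auto
      have "al/(al + u)^2 - ga/(ga + u)^2 = (al*(ga+u)^2 - ga*(al+u)^2)/((al+u)^2*(ga+u)^2)"
        using A by (simp add: field_simps)
      also have "al*(ga+u)^2 - ga*(al+u)^2 = (al - ga)*(u^2 - al*ga)"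
        by (simp add: algebra_simps power2_eq_square)
      finally have "al/(al + u)^2 - ga/(ga + u)^2 \<ge> 0"
        using \<open>u^2 \<ge> al*ga\<close> a P unfolding al_def by simp
      moreover have "c*u \<ge> 0" using c0 u be0 by simp
      ultimately have "c*u*(al/(al + u)^2 - ga/(ga + u)^2) \<ge> 0" by simp
      then show ?thesis unfolding g''_def u_def[symmetric] by (simp add: right_diff_distrib)
    qed
  qed
  show ?thesis unfolding Phi2_def
  proof (rule curve_conv[where T="{0..}" and g=g])
    have bP: "1 + b*P > 0" using b P by (simp add: add_pos_nonneg)
    have yy: "1 + a*p/(1+b*P) > 0" if "p \<in> {0..P}" for p using that a bP by (simp add: add_pos_nonneg)
    show "continuous_on {0..P} (\<lambda>p. rate1 a b p P)" unfolding rate1_def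
      using bP yy by (intro continuous_intros) (auto, fastforce)
    show "connected {0..P}" by simp
    show "convex_on {0..} g" by (rule conv)
    show "(\<lambda>p. rate1 a b p P) ` {0..P} \<subseteq> {0..}" unfolding rate1_def
      using a b P by (auto simp: add_pos_nonneg)
  next
    fix p assume "p \<in> {0..P}"
    then have p: "0 \<le> p" "p \<le> P" by auto
    have bP: "1 + b*P > 0" using b P by (simp add: add_pos_nonneg)
    have y: "1 + a*p/(1+b*P) > 0" using a p bP by (simp add: add_pos_nonneg)
    have E: "exp (c * log 2 (1 + a*p/(1+b*P))) = 1 + a*p/(1+b*P)"
      unfolding c_def using y by (simp add: log_def)
    have u1: "be * (a*p/(1+b*P)) = b*p"
    proof -
      have "be = b*(1+b*P)/a" unfolding be_def by (simp add: power2_eq_square algebra_simps)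
      then show ?thesis using a bP by simp
    qed
    have u: "be * (1 + a*p/(1+b*P)) = be + b*p" using u1 by (simp add: distrib_left)
    have "g (rate1 a b p P) = (ln (1 + b*p + a*P) - ln (1 + b*p)) / ln 2"
      unfolding g_def rate1_def E u unfolding al_def ga_def c_def by (simp add: algebra_simps)
    also have "\<dots> = rate2 a b p P"
    proof -
      have bp: "1 + b*p > 0" using b p by (simp add: add_pos_nonneg)
      have bp2: "1 + b*p + a*P > 0" using bp a P by (simp add: add_pos_pos)
      have q: "1 + a*P/(1+b*p) = (1+b*p+a*P)/(1+b*p)" using bp by (simp add: field_simps)
      show ?thesis unfolding rate2_def log_def q using bp bp2 by (simp add: ln_div algebra_simps)
    qed
    finally show "g (rate1 a b p P) = rate2 a b p P" .
  qed
qed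

lemma phi1_conv:
  fixes a b P :: real
  assumes a: "a > 0" and b: "b > 0" and P: "P > 0"
    and K: "a * (1 + a * P) \<le> (b + b^2*P) * (2 + a * P)"
  shows "convex_curve (Phi1 a b P)"
proof -
  define c where "c = ln (2::real)"
  have c0: "c > 0" unfolding c_def by simp
  define A where "A = 1 + b*P - a/b"
  define B where "B = a^2*P/b"
  define D where "D = B - A"
  define M where "M = 1 + a*P"
  have B0: "B > 0" unfolding B_def using a b P by simp
  have aP: "a*P > 0" using a P by simp
  have M1: "M > 1" unfolding M_def using aP by simp
  have condA: "A*(M^2-1) + B \<ge> 0"
  proof -
    have "b*(A*(M^2-1) + B) = a*P*((b + b^2*P) * (2 + a * P) - a * (1 + a * P))"
      unfolding A_def B_def M_def using b by (simp add: field_simps power2_eq_square)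
    also have "\<dots> \<ge> 0" using K aP by simp
    finally show ?thesis using b by (simp add: zero_le_mult_iff)
  qed
  have condB: "A*(a*P) + B > 0"
  proof -
    have "A*(a*P) + B = a*P*(1+b*P)" unfolding A_def B_def using b
      by (simp add: field_simps power2_eq_square)
    then show ?thesis using aP b P by (simp add: add_pos_nonneg)
  qed
  define g where "g r = (ln (D + A*exp(c*r)) - ln (-1 + 1*exp(c*r))) / c - log 2 (1 + b*P)" for r
  define g' where "g' r = A*exp(c*r)/(D + A*exp(c*r)) - 1*exp(c*r)/(-1 + 1*exp(c*r))" for r
  define g'' where "g'' r = c*(A*exp(c*r))*D/(D + A*exp(c*r))^2 - c*(1*exp(c*r))*(-1)/(-1 + 1*exp(c*r))^2" for r
  define T where "T = {0<..log 2 M}"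
  have Eb: "exp(c*r) > 1" "exp(c*r) \<le> M" if "r \<in> T" for r
  proof -
    have r: "r > 0" "r \<le> log 2 M" using that unfolding T_def by auto
    show "exp(c*r) > 1" using r c0 by simp
    have "exp(c*r) \<le> exp(c*log 2 M)" using r c0 by simp
    also have "\<dots> = M" unfolding c_def log_def using M1 by simp
    finally show "exp(c*r) \<le> M" .
  qed
  have pos: "D + A*exp(c*r) > 0" "A*(exp(c*r))^2 + D \<ge> 0" if "r \<in> T" for r
  proof -
    note e = Eb[OF that]
    define E where "E = exp(c*r)"
    have e1: "E > 1" "E \<le> M" using e unfolding E_def by auto
    have "D + A*E > 0"
    proof (cases "A \<ge> 0")
      case True
      have "D + A*E = A*(E-1) + B" unfolding D_def by (simp add: algebra_simps)
      moreover have "A*(E-1) \<ge> 0" using True e1 by simp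
      ultimately show ?thesis using B0 by simp
    next
      case False
      have "D + A*E = A*(E-1) + B" unfolding D_def by (simp add: algebra_simps)
      moreover have "A*(E-1) \<ge> A*(a*P)" using False e1 unfolding M_def
        by (intro mult_left_mono_neg) auto
      ultimately show ?thesis using condB by simp
    qed
    moreover have "A*E^2 + D \<ge> 0"
    proof (cases "A \<ge> 0")
      case True
      have "A*E^2 + D = A*(E^2-1) + B" unfolding D_def by (simp add: algebra_simps)
      moreover have "E^2 \<ge> 1" using e1 by (simp add: one_le_power)
      then have "A*(E^2-1) \<ge> 0" using True by simp
      ultimately show ?thesis using B0 by simp
    next
      case False
      have "A*E^2 + D = A*(E^2-1) + B" unfolding D_def by (simp add: algebra_simps)
      moreover have "E^2 \<le> M^2" using e1 by (intro power_mono) auto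
      then have "A*(E^2-1) \<ge> A*(M^2-1)" using False
        by (intro mult_left_mono_neg) auto
      ultimately show ?thesis using condA by simp
    qed
    ultimately show "D + A*exp(c*r) > 0" "A*(exp(c*r))^2 + D \<ge> 0" unfolding E_def by auto
  qed
  have conv: "convex_on T g"
  proof (rule f''_ge0_imp_convex)
    show "convex T" unfolding T_def by simp
  next
    fix r :: real assume rT: "r \<in> T"
    note p0 = pos[OF rT]
    note e = Eb[OF rT]
    have p: "D + A*exp(c*r) > 0" "-1 + 1*exp(c*r) > 0" "D + A*exp(c*r) \<noteq> 0" "-1 + 1*exp(c*r) \<noteq> 0"
      using p0 e by auto
    have eq: "(c * (A*exp(c*r)/(D + A*exp(c*r))) - c * (1*exp(c*r)/(-1 + 1*exp(c*r)))) / c - 0 = g' r"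
      unfolding g'_def using c0 p by (simp add: diff_divide_distrib)
    show "DERIV g r :> g' r" unfolding g_def eq[symmetric]
      by (intro DERIV_diff DERIV_cdivide d_ln p DERIV_const)
    show "DERIV g' r :> g'' r" unfolding g'_def g''_def
      by (intro DERIV_diff d_q p)
    show "g'' r \<ge> 0"
    proof -
      define E where "E = exp(c*r)"
      have E1: "E - 1 > 0" "D + A*E > 0" using p unfolding E_def by auto
      have X: "(D+A*E)^2 \<noteq> 0" "(E-1)^2 \<noteq> 0" using E1 by auto
      have "g'' r = c*E*A*D/(D+A*E)^2 + c*E/(E-1)^2"
        unfolding g''_def E_def[symmetric] by (simp add: mult_ac)
      also have "\<dots> = (c*E*A*D*(E-1)^2 + c*E*(D+A*E)^2)/((D+A*E)^2*(E-1)^2)"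
        using X by (simp add: add_frac_eq)
      also have "c*E*A*D*(E-1)^2 + c*E*(D+A*E)^2 = c*E*(A*D*(E-1)^2 + (D+A*E)^2)"
        by (simp add: algebra_simps)
      also have "A*D*(E-1)^2 + (D+A*E)^2 = B*(A*E^2 + D)"
        unfolding D_def by (simp add: algebra_simps power2_eq_square)
      finally have gg: "g'' r = c*E*(B*(A*E^2 + D))/((D+A*E)^2*(E-1)^2)" .
      have "A*E^2 + D \<ge> 0" using p0 unfolding E_def by simp
      moreover have "E > 0" unfolding E_def by simp
      ultimately show ?thesis unfolding gg using c0 B0 by simp
    qed
  qed
  show ?thesis unfolding Phi1_def
  proof (rule curve_conv[where T=T and g=g])
    have bp: "1 + b*p > 0" if "p \<in> {0..P}" for p using that b by (simp add: add_pos_nonneg)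
    have yy: "1 + a*P/(1+b*p) > 0" if "p \<in> {0..P}" for p using bp[OF that] aP by (simp add: add_pos_nonneg)
    show "continuous_on {0..P} (\<lambda>p. rate1 a b P p)" unfolding rate1_def
      using bp yy by (intro continuous_intros) (auto, fastforce+)
    show "connected {0..P}" by simp
    show "convex_on T g" by (rule conv)
    show "(\<lambda>p. rate1 a b P p) ` {0..P} \<subseteq> T"
    proof
      fix x assume "x \<in> (\<lambda>p. rate1 a b P p) ` {0..P}"
      then obtain p where p: "p \<in> {0..P}" and x: "x = log 2 (1 + a*P/(1+b*p))"
        unfolding rate1_def by auto
      have q: "a*P/(1+b*p) > 0" using aP bp[OF p] by simp
      have q2: "a*P/(1+b*p) \<le> a*P" using aP bp[OF p] p b
        by (simp add: divide_le_eq mult_le_cancel_left1 add_nonneg_nonneg)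
      have "x > 0" unfolding x using q by simp
      moreover have "x \<le> log 2 M" unfolding x M_def using q q2 by simp
      ultimately show "x \<in> T" unfolding T_def by simp
    qed
  next
    fix p assume "p \<in> {0..P}"
    then have p: "0 \<le> p" "p \<le> P" by auto
    have bp: "1 + b*p > 0" using b p by (simp add: add_pos_nonneg)
    have bP: "1 + b*P > 0" using b P by (simp add: add_pos_nonneg)
    define y where "y = 1 + a*P/(1+b*p)"
    have y: "y > 0" unfolding y_def using aP bp by (simp add: add_pos_nonneg)
    have E: "exp (c * log 2 y) = y"
      unfolding c_def using y by (simp add: log_def)
    have w: "-1 + 1*y = a*P/(1+b*p)" unfolding y_def by simp
    have w0: "a*P/(1+b*p) > 0" using aP bp by simp
    have dy: "D + A*y = (1 + b*P + a*p) * (a*P/(1+b*p))"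
    proof -
      define w where "w = a*P/(1+b*p)"
      have "D + A*y = A*w + B" unfolding D_def y_def w_def by (simp add: algebra_simps)
      moreover have "B = (a/b + a*p)*w"
      proof -
        have "a/b + a*p = a*(1+b*p)/b" using b by (simp add: field_simps)
        then have "(a/b + a*p)*w = (a*(1+b*p)/b) * (a*P/(1+b*p))" unfolding w_def by simp
        also have "\<dots> = a^2*P/b" using bp by (simp add: power2_eq_square)
        finally show ?thesis unfolding B_def by simp
      qed
      ultimately have "D + A*y = (A + a/b + a*p)*w" by (simp add: algebra_simps)
      moreover have "A + a/b + a*p = 1 + b*P + a*p" unfolding A_def by simp
      ultimately show ?thesis unfolding w_def by simp
    qed
    have pp: "1 + b*P + a*p > 0" using bP a p by (simp add: add_pos_nonneg)
    have "g (rate1 a b P p) = ln (1 + b*P + a*p) / c - log 2 (1 + b*P)"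
    proof -
      have lm: "ln ((1 + b*P + a*p) * (a*P/(1+b*p))) = ln (1 + b*P + a*p) + ln (a*P/(1+b*p))"
        using pp w0 by (rule ln_mult_pos)
      show ?thesis unfolding g_def rate1_def y_def[symmetric] E dy w lm by simp
    qed
    also have "\<dots> = rate2 a b P p"
    proof -
      have q: "1 + a*p/(1+b*P) = (1+b*P+a*p)/(1+b*P)" using bP by (simp add: field_simps)
      show ?thesis unfolding rate2_def log_def q c_def using bP pp by (simp add: ln_div diff_divide_distrib)
    qed
    finally show "g (rate1 a b P p) = rate2 a b P p" .
  qed
qed

theorem mainTheorem10:
  fixes a b Pmax :: real
  assumes "a > 0" and "b > 0" and "Pmax > 0"
    and "b \<ge> sqrt (1 + a * Pmax) / Pmax"
  shows "Q_sym a b Pmax \<le> 0 \<and> convex_curve (Phi1 a b Pmax) \<and> convex_curve (Phi2 a b Pmax)"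
proof -
  have K: "a * (1 + a * Pmax) \<le> (b + b^2*Pmax) * (2 + a * Pmax)" by (rule keyK[OF assms])
  show ?thesis using Qpart[OF assms(1-3) K] phi1_conv[OF assms(1-3) K] phi2_conv[OF assms(1-3) K] by blast
qed

end
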